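(* Let $K$ be a finite group with trivial centre $Z(K)=1$, written additively as $(K,+)$. (1) Let $B$ be a skew left brace with additive group $(B,+)=K$ and multiplicative group $C=(B,\cdot)$. Then there exist subgroups $X$ and $Y$ of $\mathrm{Aut}(K)$ satisfying: (a) $XY = X\,\mathrm{Inn}(K) = Y\,\mathrm{Inn}(K)$; (b) there are subgroups $N, M \le \mathrm{Inn}(K)$ with $N \trianglelefteq X$ and $M \trianglelefteq Y$, and a group isomorphism $\gamma\colon Y/M \to X/N$ such that: whenever $x\in X$, $y\in Y$ satisfy $\gamma(yM)=xN$, we have $xy^{-1}\in \mathrm{Inn}(K)$; and for every $z\in \mathrm{Inn}(K)$ there exist $x\in X$, $y\in Y$ with $xN=\gamma(yM)$ and $xy^{-1}=z$; (c) $|K| = |X|\,|M| = |Y|\,|N|$; and moreover (d) $C$ has two normal subgroups $T$ and $V$ with $T\cap V=1$, $X\cong C/T$ and $Y\cong C/V$. (2) Conversely, if $X$ and $Y$ are subgroups of $\mathrm{Aut}(K)$ satisfying (a), (b), (c) (for some $N$, $M$, $\gamma$ as in (b)), then there exists a skew left brace $B$ with additive group $(B,+)=K$ whose multiplicative group $C=(B,\cdot)$ has two normal subgroups $T$, $V$ with $T\cap V=1$, $X\cong C/T$ and $Y\cong C/V$.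
   Context: A skew left brace is a set $B$ with two group structures $(B,+)$ (not necessarily abelian) and $(B,\cdot)$ such that $a(b+c) = ab - a + ac$ for all $a,b,c\in B$. Its additive group is $(B,+)$ and its multiplicative group is $(B,\cdot)$. $\mathrm{Inn}(K)$ denotes the group of inner automorphisms of $K$. Products of subgroups such as $XY$ denote the set $\{xy : x\in X, y\in Y\}$ inside $\mathrm{Aut}(K)$. *)

theory Defs
  imports "HOL-Algebra.Coset" "HOL-Algebra.Bij"
begin

definition grp_center :: "('a, 'b) monoid_scheme \<Rightarrow> 'a set" where
  "grp_center K = {z \<in> carrier K. \<forall>g \<in> carrier K. z \<otimes>\<^bsub>K\<^esub> g = g \<otimes>\<^bsub>K\<^esub> z}"

definition inn :: "('a, 'b) monoid_scheme \<Rightarrow> ('a \<Rightarrow> 'a) set" where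
  "inn K = (\<lambda>g. \<lambda>x \<in> carrier K. g \<otimes>\<^bsub>K\<^esub> x \<otimes>\<^bsub>K\<^esub> inv\<^bsub>K\<^esub> g) ` carrier K"

text \<open>C is the multiplicative group of a skew left brace whose additive group is K
  (the brace addition a + b is written a \<otimes>K b, and -a is inv K a).\<close>
definition skew_brace_mult :: "('a, 'b) monoid_scheme \<Rightarrow> 'a monoid \<Rightarrow> bool" where
  "skew_brace_mult K C \<longleftrightarrow> group C \<and> carrier C = carrier K \<and>
     (\<forall>a \<in> carrier K. \<forall>b \<in> carrier K. \<forall>c \<in> carrier K.
        a \<otimes>\<^bsub>C\<^esub> (b \<otimes>\<^bsub>K\<^esub> c)
          = (a \<otimes>\<^bsub>C\<^esub> b) \<otimes>\<^bsub>K\<^esub> inv\<^bsub>K\<^esub> a \<otimes>\<^bsub>K\<^esub> (a \<otimes>\<^bsub>C\<^esub> c))"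

definition aut_conditions ::
  "('a, 'b) monoid_scheme \<Rightarrow> ('a \<Rightarrow> 'a) set \<Rightarrow> ('a \<Rightarrow> 'a) set \<Rightarrow> ('a \<Rightarrow> 'a) set \<Rightarrow> ('a \<Rightarrow> 'a) set
     \<Rightarrow> (('a \<Rightarrow> 'a) set \<Rightarrow> ('a \<Rightarrow> 'a) set) \<Rightarrow> bool" where
  "aut_conditions K X Y N M \<gamma> \<longleftrightarrow>
     (
      \<comment> \<open>(a)\<close>
      set_mult (AutoGroup K) X (Y) = set_mult (AutoGroup K) X (inn K) \<and> set_mult (AutoGroup K) Y (inn K) = set_mult (AutoGroup K) X (Y) \<and>
      \<comment> \<open>(b)\<close>
      N \<subseteq> inn K \<and> M \<subseteq> inn K \<and>
      normal N ((AutoGroup K)\<lparr>carrier := X\<rparr>) \<and> normal M ((AutoGroup K)\<lparr>carrier := Y\<rparr>) \<and>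
      \<gamma> \<in> iso ((AutoGroup K)\<lparr>carrier := Y\<rparr> Mod M) ((AutoGroup K)\<lparr>carrier := X\<rparr> Mod N) \<and>
      (\<forall>x \<in> X. \<forall>y \<in> Y. \<gamma> (r_coset (AutoGroup K) M y) = r_coset (AutoGroup K) N x \<longrightarrow> monoid.mult (AutoGroup K) x (m_inv (AutoGroup K) y) \<in> inn K) \<and>
      (\<forall>z \<in> inn K. \<exists>x \<in> X. \<exists>y \<in> Y. r_coset (AutoGroup K) N x = \<gamma> (r_coset (AutoGroup K) M y) \<and> monoid.mult (AutoGroup K) x (m_inv (AutoGroup K) y) = z) \<and>
      \<comment> \<open>(c)\<close>
      card (carrier K) = card X * card M \<and> card (carrier K) = card Y * card N)"

end

theory Submission
  imports Defs
begin


locale zk = group K for K (structure) +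
  assumes finK: "finite (carrier K)"
    and ctr: "grp_center K = {\<one>}"
begin

abbreviation "A \<equiv> AutoGroup K"

lemma canc1[simp]: "g \<in> carrier K \<Longrightarrow> z \<in> carrier K \<Longrightarrow> inv g \<otimes> (g \<otimes> z) = z"
  by (simp add: m_assoc[symmetric])
lemma canc2[simp]: "g \<in> carrier K \<Longrightarrow> z \<in> carrier K \<Longrightarrow> g \<otimes> (inv g \<otimes> z) = z"
  by (simp add: m_assoc[symmetric])

definition cj :: "'a \<Rightarrow> 'a \<Rightarrow> 'a" where
  "cj g = (\<lambda>x \<in> carrier K. g \<otimes> x \<otimes> inv g)"

lemma inn_eq: "inn K = cj ` carrier K"
  by (simp add: inn_def cj_def)

lemma A_group: "group A" by (rule AutoGroup)

lemma A_carrier[simp]: "carrier A = auto K"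
  by (simp add: AutoGroup_def)

lemma A_mult: "f \<in> auto K \<Longrightarrow> g \<in> auto K \<Longrightarrow> f \<otimes>\<^bsub>A\<^esub> g = compose (carrier K) f g"
  by (simp add: AutoGroup_def BijGroup_def auto_def)

lemma A_mult_apply[simp]: "f \<in> auto K \<Longrightarrow> g \<in> auto K \<Longrightarrow> x \<in> carrier K \<Longrightarrow> (f \<otimes>\<^bsub>A\<^esub> g) x = f (g x)"
  by (simp add: A_mult compose_def)

lemma A_one: "\<one>\<^bsub>A\<^esub> = (\<lambda>x \<in> carrier K. x)"
  by (simp add: AutoGroup_def BijGroup_def)

lemma A_one_apply[simp]: "x \<in> carrier K \<Longrightarrow> \<one>\<^bsub>A\<^esub> x = x"
  by (simp add: A_one)

lemma auto_ext: "f \<in> auto K \<Longrightarrow> g \<in> auto K \<Longrightarrow> (\<And>x. x \<in> carrier K \<Longrightarrow> f x = g x) \<Longrightarrow> f = g"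
  by (auto simp: auto_def Bij_def intro: extensionalityI)

lemma auto_closed[simp]: "f \<in> auto K \<Longrightarrow> x \<in> carrier K \<Longrightarrow> f x \<in> carrier K"
  unfolding auto_def by (blast intro: hom_in_carrier)

lemma auto_hom[simp]: "f \<in> auto K \<Longrightarrow> x \<in> carrier K \<Longrightarrow> y \<in> carrier K \<Longrightarrow> f (x \<otimes> y) = f x \<otimes> f y"
  unfolding auto_def by (blast intro: hom_mult)

lemma auto_gh: "f \<in> auto K \<Longrightarrow> group_hom K K f"
  unfolding group_hom_def group_hom_axioms_def auto_def using is_group by blast

lemma auto_one[simp]: "f \<in> auto K \<Longrightarrow> f \<one> = \<one>"
  by (drule auto_gh) (rule group_hom.hom_one)

lemma auto_inv[simp]: "f \<in> auto K \<Longrightarrow> x \<in> carrier K \<Longrightarrow> f (inv x) = inv (f x)"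
  by (drule auto_gh) (rule group_hom.hom_inv)

lemma A_inv_closed[simp]: "f \<in> auto K \<Longrightarrow> inv\<^bsub>A\<^esub> f \<in> auto K"
  using group.inv_closed[OF A_group, of f] by simp

lemma A_mult_closed[simp]: "f \<in> auto K \<Longrightarrow> g \<in> auto K \<Longrightarrow> f \<otimes>\<^bsub>A\<^esub> g \<in> auto K"
  using monoid.m_closed[OF group.is_monoid[OF A_group], of f g] by simp

lemma A_one_closed[simp]: "\<one>\<^bsub>A\<^esub> \<in> auto K"
  using monoid.one_closed[OF group.is_monoid[OF A_group]] by simp

lemma A_inv_apply1[simp]: "f \<in> auto K \<Longrightarrow> x \<in> carrier K \<Longrightarrow> f ((inv\<^bsub>A\<^esub> f) x) = x"
proof -
  assume f: "f \<in> auto K" and x: "x \<in> carrier K"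
  have "f \<otimes>\<^bsub>A\<^esub> inv\<^bsub>A\<^esub> f = \<one>\<^bsub>A\<^esub>" using group.r_inv[OF A_group, of f] f by simp
  hence "(f \<otimes>\<^bsub>A\<^esub> inv\<^bsub>A\<^esub> f) x = x" using x by simp
  thus ?thesis using f x by simp
qed

lemma A_inv_apply2[simp]: "f \<in> auto K \<Longrightarrow> x \<in> carrier K \<Longrightarrow> (inv\<^bsub>A\<^esub> f) (f x) = x"
proof -
  assume f: "f \<in> auto K" and x: "x \<in> carrier K"
  have "inv\<^bsub>A\<^esub> f \<otimes>\<^bsub>A\<^esub> f = \<one>\<^bsub>A\<^esub>" using group.l_inv[OF A_group, of f] f by simp
  hence "((inv\<^bsub>A\<^esub> f) \<otimes>\<^bsub>A\<^esub> f) x = x" using x by simp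
  thus ?thesis using f x by simp
qed

lemma auto_inj: "f \<in> auto K \<Longrightarrow> x \<in> carrier K \<Longrightarrow> y \<in> carrier K \<Longrightarrow> f x = f y \<Longrightarrow> x = y"
  by (metis A_inv_apply2)

lemma cj_apply[simp]: "x \<in> carrier K \<Longrightarrow> cj g x = g \<otimes> x \<otimes> inv g"
  by (simp add: cj_def)

lemma cj_auto[simp]: "g \<in> carrier K \<Longrightarrow> cj g \<in> auto K"
proof -
  assume g: "g \<in> carrier K"
  have h: "cj g \<in> hom K K"
    by (auto simp: hom_def cj_def g m_assoc)
  have "bij_betw (cj g) (carrier K) (carrier K)"
  proof (rule bij_betwI[where g="cj (inv g)"])
    show "cj g \<in> carrier K \<rightarrow> carrier K" using g by auto
    show "cj (inv g) \<in> carrier K \<rightarrow> carrier K" using g by auto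
    show "\<And>x. x \<in> carrier K \<Longrightarrow> cj (inv g) (cj g x) = x" using g by (simp add: m_assoc)
    show "\<And>x. x \<in> carrier K \<Longrightarrow> cj g (cj (inv g) x) = x" using g by (simp add: m_assoc)
  qed
  thus ?thesis using h by (simp add: auto_def Bij_def cj_def)
qed

lemma cj_in_inn: "g \<in> carrier K \<Longrightarrow> cj g \<in> inn K" by (simp add: inn_eq)

lemma inn_sub: "inn K \<subseteq> auto K" by (auto simp: inn_eq)

lemma cj_mult: "g \<in> carrier K \<Longrightarrow> h \<in> carrier K \<Longrightarrow> cj (g \<otimes> h) = cj g \<otimes>\<^bsub>A\<^esub> cj h"
  by (rule auto_ext) (simp_all add: m_assoc inv_mult_group)

lemma cj_one: "cj \<one> = \<one>\<^bsub>A\<^esub>"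
  by (rule auto_ext) simp_all

lemma cj_inv: "g \<in> carrier K \<Longrightarrow> inv\<^bsub>A\<^esub> (cj g) = cj (inv g)"
proof -
  assume g: "g \<in> carrier K"
  have "cj g \<otimes>\<^bsub>A\<^esub> cj (inv g) = \<one>\<^bsub>A\<^esub>" using g by (simp add: cj_mult[symmetric] cj_one)
  hence "cj (inv g) \<otimes>\<^bsub>A\<^esub> cj g = \<one>\<^bsub>A\<^esub>" using g by (simp add: cj_mult[symmetric] cj_one)
  thus ?thesis using g group.inv_equality[OF A_group] by simp
qed

lemma cj_aut: "f \<in> auto K \<Longrightarrow> g \<in> carrier K \<Longrightarrow> f \<otimes>\<^bsub>A\<^esub> cj g = cj (f g) \<otimes>\<^bsub>A\<^esub> f"
  by (rule auto_ext) simp_all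

lemma cj_aut': "f \<in> auto K \<Longrightarrow> g \<in> carrier K \<Longrightarrow> cj g \<otimes>\<^bsub>A\<^esub> f = f \<otimes>\<^bsub>A\<^esub> cj ((inv\<^bsub>A\<^esub> f) g)"
  using cj_aut[of f "(inv\<^bsub>A\<^esub> f) g"] by simp

lemma cj_triv: "g \<in> carrier K \<Longrightarrow> cj g = \<one>\<^bsub>A\<^esub> \<Longrightarrow> g = \<one>"
proof -
  assume g: "g \<in> carrier K" and e: "cj g = \<one>\<^bsub>A\<^esub>"
  have "\<forall>x\<in>carrier K. g \<otimes> x = x \<otimes> g"
  proof
    fix x assume x: "x \<in> carrier K"
    have "cj g x = x" using e x by simp
    hence "g \<otimes> x \<otimes> inv g \<otimes> g = x \<otimes> g" using x g by simp
    thus "g \<otimes> x = x \<otimes> g" using x g by (simp add: m_assoc)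
  qed
  hence "g \<in> grp_center K" using g by (auto simp: grp_center_def)
  thus ?thesis using ctr by simp
qed

lemma cj_inj: "g \<in> carrier K \<Longrightarrow> h \<in> carrier K \<Longrightarrow> cj g = cj h \<Longrightarrow> g = h"
proof -
  assume g: "g \<in> carrier K" and h: "h \<in> carrier K" and e: "cj g = cj h"
  have "cj (g \<otimes> inv h) = \<one>\<^bsub>A\<^esub>"
    using g h e by (simp add: cj_mult cj_inv[symmetric] group.r_inv[OF A_group])
  hence "g \<otimes> inv h = \<one>" using g h by (intro cj_triv) simp_all
  hence "g \<otimes> inv h \<otimes> h = h" using g h by simp
  thus ?thesis using g h by (simp add: m_assoc)
qed

lemma finite_auto: "finite (auto K)"
proof -
  have "auto K \<subseteq> (carrier K \<rightarrow>\<^sub>E carrier K)"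
    by (auto simp: auto_def Bij_def PiE_def bij_betw_def)
  moreover have "finite (carrier K \<rightarrow>\<^sub>E carrier K)" using finK by (intro finite_PiE) auto
  ultimately show ?thesis by (rule finite_subset)
qed

end

sublocale zk \<subseteq> AG: group "AutoGroup K" by (rule AutoGroup)



locale p1 = zk +
  fixes C :: "'a monoid"
  assumes sb: "skew_brace_mult K C"
begin

lemma gC: "group C" and cC[simp]: "carrier C = carrier K"
  and br: "\<And>a b c. a \<in> carrier K \<Longrightarrow> b \<in> carrier K \<Longrightarrow> c \<in> carrier K \<Longrightarrow>
        a \<otimes>\<^bsub>C\<^esub> (b \<otimes> c) = (a \<otimes>\<^bsub>C\<^esub> b) \<otimes> inv a \<otimes> (a \<otimes>\<^bsub>C\<^esub> c)"
  using sb unfolding skew_brace_mult_def by blast+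

end

sublocale p1 \<subseteq> CG: group C by (rule gC)

context p1 begin

lemma mCc[simp]: "a \<in> carrier K \<Longrightarrow> b \<in> carrier K \<Longrightarrow> a \<otimes>\<^bsub>C\<^esub> b \<in> carrier K"
  using CG.m_closed by simp
lemma invCc[simp]: "a \<in> carrier K \<Longrightarrow> inv\<^bsub>C\<^esub> a \<in> carrier K"
  using CG.inv_closed by simp

lemma rone: assumes a: "a \<in> carrier K" shows "a \<otimes>\<^bsub>C\<^esub> \<one> = a"
proof -
  let ?u = "a \<otimes>\<^bsub>C\<^esub> \<one>"
  have u: "?u \<in> carrier K" using a by simp
  have "?u = ?u \<otimes> inv a \<otimes> ?u" using br[OF a one_closed one_closed] by simp
  hence "inv a \<otimes> ?u = \<one>" using u a l_cancel_one'[of ?u "inv a \<otimes> ?u"] by (simp add: m_assoc)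
  thus ?thesis using a u by (metis canc2 r_one)
qed

lemma oneC: "\<one>\<^bsub>C\<^esub> = \<one>"
  using rone[of "\<one>\<^bsub>C\<^esub>"] CG.l_one[of \<one>] CG.one_closed by simp

definition lm :: "'a \<Rightarrow> 'a \<Rightarrow> 'a" where
  "lm a = (\<lambda>b \<in> carrier K. inv a \<otimes> (a \<otimes>\<^bsub>C\<^esub> b))"

lemma lm_apply[simp]: "b \<in> carrier K \<Longrightarrow> lm a b = inv a \<otimes> (a \<otimes>\<^bsub>C\<^esub> b)"
  by (simp add: lm_def)

lemma multC: "a \<in> carrier K \<Longrightarrow> b \<in> carrier K \<Longrightarrow> a \<otimes>\<^bsub>C\<^esub> b = a \<otimes> lm a b"
  by simp

lemma lm_auto[simp]: assumes a: "a \<in> carrier K" shows "lm a \<in> auto K"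
proof -
  have h: "lm a \<in> hom K K"
    using a by (auto simp: hom_def br m_assoc)
  have "bij_betw (lm a) (carrier K) (carrier K)"
  proof (rule bij_betwI[where g="\<lambda>b. inv\<^bsub>C\<^esub> a \<otimes>\<^bsub>C\<^esub> (a \<otimes> b)"])
    show "lm a \<in> carrier K \<rightarrow> carrier K" using a by auto
    show "(\<lambda>b. inv\<^bsub>C\<^esub> a \<otimes>\<^bsub>C\<^esub> (a \<otimes> b)) \<in> carrier K \<rightarrow> carrier K" using a by auto
    show "\<And>x. x \<in> carrier K \<Longrightarrow> inv\<^bsub>C\<^esub> a \<otimes>\<^bsub>C\<^esub> (a \<otimes> lm a x) = x"
      using a by (simp add: CG.m_assoc[symmetric])
    show "\<And>x. x \<in> carrier K \<Longrightarrow> lm a (inv\<^bsub>C\<^esub> a \<otimes>\<^bsub>C\<^esub> (a \<otimes> x)) = x"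
      using a by (simp add: CG.m_assoc[symmetric])
  qed
  thus ?thesis using h by (simp add: auto_def Bij_def lm_def)
qed

lemma lm_mult: assumes a: "a \<in> carrier K" and b: "b \<in> carrier K"
  shows "lm (a \<otimes>\<^bsub>C\<^esub> b) = lm a \<otimes>\<^bsub>A\<^esub> lm b"
proof (rule auto_ext)
  fix c assume c: "c \<in> carrier K"
  have "(lm a \<otimes>\<^bsub>A\<^esub> lm b) c = lm a (inv b \<otimes> (b \<otimes>\<^bsub>C\<^esub> c))" using a b c by simp
  also have "\<dots> = lm a (inv b) \<otimes> lm a (b \<otimes>\<^bsub>C\<^esub> c)" using a b c by (simp del: lm_apply)
  also have "\<dots> = inv (lm a b) \<otimes> (inv a \<otimes> (a \<otimes>\<^bsub>C\<^esub> (b \<otimes>\<^bsub>C\<^esub> c)))"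
    using a b c by (simp del: lm_apply) simp
  also have "\<dots> = inv (a \<otimes> lm a b) \<otimes> ((a \<otimes>\<^bsub>C\<^esub> b) \<otimes>\<^bsub>C\<^esub> c)"
    using a b c by (simp del: lm_apply add: inv_mult_group m_assoc CG.m_assoc)
  also have "\<dots> = lm (a \<otimes>\<^bsub>C\<^esub> b) c" using a b c by simp
  finally show "lm (a \<otimes>\<^bsub>C\<^esub> b) c = (lm a \<otimes>\<^bsub>A\<^esub> lm b) c" by simp
qed (use a b in simp_all)

lemma lC1[simp]: "x \<in> carrier K \<Longrightarrow> \<one> \<otimes>\<^bsub>C\<^esub> x = x"
  using CG.l_one[of x] by (simp add: oneC)

lemma lm_one: "lm \<one> = \<one>\<^bsub>A\<^esub>"
  by (rule auto_ext) simp_all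

definition rh :: "'a \<Rightarrow> 'a \<Rightarrow> 'a" where "rh a = cj a \<otimes>\<^bsub>A\<^esub> lm a"

lemma rh_auto[simp]: "a \<in> carrier K \<Longrightarrow> rh a \<in> auto K" by (simp add: rh_def)

lemma rh_mult: assumes a: "a \<in> carrier K" and b: "b \<in> carrier K"
  shows "rh (a \<otimes>\<^bsub>C\<^esub> b) = rh a \<otimes>\<^bsub>A\<^esub> rh b"
proof -
  have "rh (a \<otimes>\<^bsub>C\<^esub> b) = cj (a \<otimes>\<^bsub>C\<^esub> b) \<otimes>\<^bsub>A\<^esub> (lm a \<otimes>\<^bsub>A\<^esub> lm b)"
    unfolding rh_def lm_mult[OF a b] ..
  also have "\<dots> = rh a \<otimes>\<^bsub>A\<^esub> rh b"
    unfolding rh_def multC[OF a b] using a b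
    by (intro auto_ext) (simp_all del: lm_apply add: m_assoc inv_mult_group)
  finally show ?thesis .
qed

lemma rh_one: "rh \<one> = \<one>\<^bsub>A\<^esub>" by (simp add: rh_def lm_one cj_one)

lemma hom_lm: "lm \<in> hom C A" by (auto simp: hom_def lm_mult)
lemma hom_rh: "rh \<in> hom C A" by (auto simp: hom_def rh_mult)
lemma gh_lm: "group_hom C A lm" by (simp add: group_hom_def group_hom_axioms_def gC hom_lm AutoGroup)
lemma gh_rh: "group_hom C A rh" by (simp add: group_hom_def group_hom_axioms_def gC hom_rh AutoGroup)

definition "X1 = rh ` carrier K"
definition "Y1 = lm ` carrier K"
definition "kl = {a \<in> carrier K. lm a = \<one>\<^bsub>A\<^esub>}"
definition "kr = {a \<in> carrier K. rh a = \<one>\<^bsub>A\<^esub>}"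
definition "N1 = rh ` kl"
definition "M1 = lm ` kr"
definition "\<gamma>1 S = rh ` {c \<in> carrier K. lm c \<in> S}"

abbreviation "AX1 \<equiv> (AutoGroup K)\<lparr>carrier := X1\<rparr>"
abbreviation "AY1 \<equiv> (AutoGroup K)\<lparr>carrier := Y1\<rparr>"

lemma subX1: "subgroup X1 A"
  using group_hom.img_is_subgroup[OF gh_rh] by (simp add: X1_def)
lemma subY1: "subgroup Y1 A"
  using group_hom.img_is_subgroup[OF gh_lm] by (simp add: Y1_def)
lemma gAX1: "group AX1" by (rule subgroup.subgroup_is_group[OF subX1 AutoGroup])
lemma gAY1: "group AY1" by (rule subgroup.subgroup_is_group[OF subY1 AutoGroup])

lemma X1A: "X1 \<subseteq> auto K" by (auto simp: X1_def)
lemma Y1A: "Y1 \<subseteq> auto K" by (auto simp: Y1_def)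

lemma gh_rhX: "group_hom C AX1 rh"
  using gC gAX1 hom_rh by (auto simp: group_hom_def group_hom_axioms_def hom_def X1_def)
lemma gh_lmY: "group_hom C AY1 lm"
  using gC gAY1 hom_lm by (auto simp: group_hom_def group_hom_axioms_def hom_def Y1_def)

lemma rh_surj: "rh ` carrier C = carrier AX1" by (simp add: X1_def)
lemma lm_surj: "lm ` carrier C = carrier AY1" by (simp add: Y1_def)

lemma ker_rh: "kernel C AX1 rh = kr" by (simp add: kernel_def kr_def)
lemma ker_lm: "kernel C AY1 lm = kl" by (simp add: kernel_def kl_def)

lemma nkr: "kr \<lhd> C" using group_hom.normal_kernel[OF gh_rhX] ker_rh by simp
lemma nkl: "kl \<lhd> C" using group_hom.normal_kernel[OF gh_lmY] ker_lm by simp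
lemma skr: "subgroup kr C" using nkr by (simp add: normal_def)
lemma skl: "subgroup kl C" using nkl by (simp add: normal_def)

lemma lm_invC: "a \<in> carrier K \<Longrightarrow> lm (inv\<^bsub>C\<^esub> a) = inv\<^bsub>A\<^esub> (lm a)"
  using group_hom.hom_inv[OF gh_lm] by simp
lemma rh_invC: "a \<in> carrier K \<Longrightarrow> rh (inv\<^bsub>C\<^esub> a) = inv\<^bsub>A\<^esub> (rh a)"
  using group_hom.hom_inv[OF gh_rh] by simp

lemma rh_eq: "c \<in> carrier K \<Longrightarrow> rh c = cj c \<otimes>\<^bsub>A\<^esub> lm c" by (simp add: rh_def)

lemma cj_rh: "c \<in> carrier K \<Longrightarrow> rh c \<otimes>\<^bsub>A\<^esub> inv\<^bsub>A\<^esub> (lm c) = cj c"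
  by (simp add: rh_eq AG.inv_solve_right')

lemma kl_kr: "a \<in> kl \<Longrightarrow> a \<in> kr \<Longrightarrow> a = \<one>"
proof -
  assume "a \<in> kl" "a \<in> kr"
  hence a: "a \<in> carrier K" "lm a = \<one>\<^bsub>A\<^esub>" "rh a = \<one>\<^bsub>A\<^esub>" by (auto simp: kl_def kr_def)
  hence "cj a = \<one>\<^bsub>A\<^esub>" using cj_rh[OF a(1)] by simp
  thus ?thesis using cj_triv a by simp
qed

lemma lm_eq_kl: "c \<in> carrier K \<Longrightarrow> d \<in> carrier K \<Longrightarrow> lm c = lm d \<Longrightarrow> c \<otimes>\<^bsub>C\<^esub> inv\<^bsub>C\<^esub> d \<in> kl"
  by (simp add: kl_def lm_mult lm_invC)
lemma rh_eq_kr: "c \<in> carrier K \<Longrightarrow> d \<in> carrier K \<Longrightarrow> rh c = rh d \<Longrightarrow> c \<otimes>\<^bsub>C\<^esub> inv\<^bsub>C\<^esub> d \<in> kr"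
  by (simp add: kr_def rh_mult rh_invC)

lemma Cdecomp: "c \<in> carrier K \<Longrightarrow> d \<in> carrier K \<Longrightarrow> c = (c \<otimes>\<^bsub>C\<^esub> inv\<^bsub>C\<^esub> d) \<otimes>\<^bsub>C\<^esub> d"
  by (simp add: CG.m_assoc)

lemma kl_sub: "kl \<subseteq> carrier K" by (auto simp: kl_def)
lemma kr_sub: "kr \<subseteq> carrier K" by (auto simp: kr_def)
lemma one_kl: "\<one> \<in> kl" by (simp add: kl_def lm_one)
lemma one_kr: "\<one> \<in> kr" by (simp add: kr_def rh_one)

lemma N1_inn: "N1 \<subseteq> inn K"
proof
  fix n assume "n \<in> N1"
  then obtain a where a: "a \<in> kl" "n = rh a" by (auto simp: N1_def)
  hence "n = cj a" using rh_eq[of a] by (simp add: kl_def)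
  thus "n \<in> inn K" using a kl_sub by (auto simp: inn_eq)
qed

lemma M1_inn: "M1 \<subseteq> inn K"
proof
  fix m assume "m \<in> M1"
  then obtain a where a: "a \<in> kr" "m = lm a" by (auto simp: M1_def)
  hence ak: "a \<in> carrier K" "rh a = \<one>\<^bsub>A\<^esub>" by (auto simp: kr_def)
  have "cj a = inv\<^bsub>A\<^esub> (lm a)" using cj_rh[OF ak(1)] ak by simp
  hence "lm a = cj (inv a)" using ak by (metis AG.inv_inv lm_auto A_carrier cj_inv)
  thus "m \<in> inn K" using a ak by (auto simp: inn_eq)
qed

lemma N1_normal: "N1 \<lhd> AX1"
proof -
  have sN: "subgroup N1 AX1"
    using group_hom.subgroup_img_is_subgroup[OF gh_rhX skl] by (simp add: N1_def)
  have "\<forall>x\<in>carrier AX1. \<forall>h\<in>N1. x \<otimes>\<^bsub>AX1\<^esub> h \<otimes>\<^bsub>AX1\<^esub> inv\<^bsub>AX1\<^esub> x \<in> N1"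
  proof (intro ballI)
    fix x h assume "x \<in> carrier AX1" "h \<in> N1"
    then obtain c a where c: "c \<in> carrier K" "x = rh c" and a: "a \<in> kl" "h = rh a"
      by (auto simp: X1_def N1_def)
    have ac: "a \<in> carrier K" using a kl_sub by blast
    have e: "c \<otimes>\<^bsub>C\<^esub> a \<otimes>\<^bsub>C\<^esub> inv\<^bsub>C\<^esub> c \<in> kl"
      using nkl c a by (simp add: CG.normal_inv_iff)
    have "x \<otimes>\<^bsub>AX1\<^esub> h \<otimes>\<^bsub>AX1\<^esub> inv\<^bsub>AX1\<^esub> x = rh (c \<otimes>\<^bsub>C\<^esub> a \<otimes>\<^bsub>C\<^esub> inv\<^bsub>C\<^esub> c)"
      using group_hom.hom_mult[OF gh_rhX] group_hom.hom_inv[OF gh_rhX] c ac a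
      by simp
    thus "x \<otimes>\<^bsub>AX1\<^esub> h \<otimes>\<^bsub>AX1\<^esub> inv\<^bsub>AX1\<^esub> x \<in> N1" using e by (simp add: N1_def)
  qed
  thus ?thesis using sN group.normal_inv_iff[OF gAX1] by blast
qed

lemma M1_normal: "M1 \<lhd> AY1"
proof -
  have sM: "subgroup M1 AY1"
    using group_hom.subgroup_img_is_subgroup[OF gh_lmY skr] by (simp add: M1_def)
  have "\<forall>x\<in>carrier AY1. \<forall>h\<in>M1. x \<otimes>\<^bsub>AY1\<^esub> h \<otimes>\<^bsub>AY1\<^esub> inv\<^bsub>AY1\<^esub> x \<in> M1"
  proof (intro ballI)
    fix x h assume "x \<in> carrier AY1" "h \<in> M1"
    then obtain c a where c: "c \<in> carrier K" "x = lm c" and a: "a \<in> kr" "h = lm a"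
      by (auto simp: Y1_def M1_def)
    have ac: "a \<in> carrier K" using a kr_sub by blast
    have e: "c \<otimes>\<^bsub>C\<^esub> a \<otimes>\<^bsub>C\<^esub> inv\<^bsub>C\<^esub> c \<in> kr"
      using nkr c a by (simp add: CG.normal_inv_iff)
    have "x \<otimes>\<^bsub>AY1\<^esub> h \<otimes>\<^bsub>AY1\<^esub> inv\<^bsub>AY1\<^esub> x = lm (c \<otimes>\<^bsub>C\<^esub> a \<otimes>\<^bsub>C\<^esub> inv\<^bsub>C\<^esub> c)"
      using group_hom.hom_mult[OF gh_lmY] group_hom.hom_inv[OF gh_lmY] c ac a
      by simp
    thus "x \<otimes>\<^bsub>AY1\<^esub> h \<otimes>\<^bsub>AY1\<^esub> inv\<^bsub>AY1\<^esub> x \<in> M1" using e by (simp add: M1_def)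
  qed
  thus ?thesis using sM group.normal_inv_iff[OF gAY1] by blast
qed

lemma mem_rcA: "z \<in> r_coset A S g \<longleftrightarrow> (\<exists>h\<in>S. z = h \<otimes>\<^bsub>A\<^esub> g)"
  by (auto simp: r_coset_def)

lemma gcos: assumes a: "a \<in> carrier K"
  shows "\<gamma>1 (r_coset A M1 (lm a)) = r_coset A N1 (rh a)"
proof (intro equalityI subsetI)
  fix z assume "z \<in> \<gamma>1 (r_coset A M1 (lm a))"
  then obtain c where c: "c \<in> carrier K" "lm c \<in> r_coset A M1 (lm a)" "z = rh c"
    by (auto simp: \<gamma>1_def)
  then obtain j where j: "j \<in> kr" "lm c = lm j \<otimes>\<^bsub>A\<^esub> lm a" by (auto simp: mem_rcA M1_def)
  have jc: "j \<in> carrier K" using j kr_sub by blast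
  let ?d = "j \<otimes>\<^bsub>C\<^esub> a"
  have d: "?d \<in> carrier K" using jc a by simp
  have "lm c = lm ?d" using j jc a by (simp add: lm_mult)
  hence i: "c \<otimes>\<^bsub>C\<^esub> inv\<^bsub>C\<^esub> ?d \<in> kl" using lm_eq_kl c d by blast
  have ic: "c \<otimes>\<^bsub>C\<^esub> inv\<^bsub>C\<^esub> ?d \<in> carrier K" using c d by simp
  have "z = rh (c \<otimes>\<^bsub>C\<^esub> inv\<^bsub>C\<^esub> ?d) \<otimes>\<^bsub>A\<^esub> rh ?d"
    using c d Cdecomp[OF c(1) d] rh_mult[OF ic d] by simp
  also have "rh ?d = rh a" using j jc a by (simp add: rh_mult kr_def)
  finally show "z \<in> r_coset A N1 (rh a)" using i by (auto simp: mem_rcA N1_def)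
next
  fix z assume "z \<in> r_coset A N1 (rh a)"
  then obtain i where i: "i \<in> kl" "z = rh i \<otimes>\<^bsub>A\<^esub> rh a" by (auto simp: mem_rcA N1_def)
  have ic: "i \<in> carrier K" using i kl_sub by blast
  have c: "i \<otimes>\<^bsub>C\<^esub> a \<in> carrier K" using ic a by simp
  have "lm (i \<otimes>\<^bsub>C\<^esub> a) = lm \<one> \<otimes>\<^bsub>A\<^esub> lm a" using i ic a by (simp add: lm_mult kl_def lm_one)
  hence "lm (i \<otimes>\<^bsub>C\<^esub> a) \<in> r_coset A M1 (lm a)" using one_kr by (auto simp: mem_rcA M1_def)
  moreover have "z = rh (i \<otimes>\<^bsub>C\<^esub> a)" using i ic a by (simp add: rh_mult)
  ultimately show "z \<in> \<gamma>1 (r_coset A M1 (lm a))" using c by (auto simp: \<gamma>1_def)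
qed

lemma rcX1: "r_coset AX1 S g = r_coset A S g" by (simp add: r_coset_def)
lemma rcY1: "r_coset AY1 S g = r_coset A S g" by (simp add: r_coset_def)
lemma smX1: "set_mult AX1 S T = set_mult A S T" by (simp add: set_mult_def)
lemma smY1: "set_mult AY1 S T = set_mult A S T" by (simp add: set_mult_def)

lemma carrY1: "carrier (AY1 Mod M1) = (\<lambda>a. r_coset A M1 (lm a)) ` carrier K"
  by (auto simp: carrier_FactGroup rcY1 Y1_def)
lemma carrX1: "carrier (AX1 Mod N1) = (\<lambda>a. r_coset A N1 (rh a)) ` carrier K"
  by (auto simp: carrier_FactGroup rcX1 X1_def)

lemma g1_hom: "group_hom (AY1 Mod M1) (AX1 Mod N1) \<gamma>1"
proof -
  have "\<gamma>1 \<in> hom (AY1 Mod M1) (AX1 Mod N1)"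
  proof (rule homI)
    fix S assume "S \<in> carrier (AY1 Mod M1)"
    then obtain a where a: "a \<in> carrier K" "S = r_coset A M1 (lm a)" using carrY1 by auto
    show "\<gamma>1 S \<in> carrier (AX1 Mod N1)" using a gcos carrX1 by auto
  next
    fix S T assume "S \<in> carrier (AY1 Mod M1)" "T \<in> carrier (AY1 Mod M1)"
    then obtain a b where a: "a \<in> carrier K" "S = r_coset A M1 (lm a)"
      and b: "b \<in> carrier K" "T = r_coset A M1 (lm b)" using carrY1 by auto
    have ST: "S \<otimes>\<^bsub>AY1 Mod M1\<^esub> T = r_coset A M1 (lm (a \<otimes>\<^bsub>C\<^esub> b))"
      using normal.rcos_sum[OF M1_normal, of "lm a" "lm b"] a b
      by (simp add: rcY1 smY1 Y1_def lm_mult)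
    have "\<gamma>1 S \<otimes>\<^bsub>AX1 Mod N1\<^esub> \<gamma>1 T = r_coset A N1 (rh (a \<otimes>\<^bsub>C\<^esub> b))"
      using normal.rcos_sum[OF N1_normal, of "rh a" "rh b"] a b
      by (simp add: rcX1 smX1 X1_def rh_mult gcos)
    thus "\<gamma>1 (S \<otimes>\<^bsub>AY1 Mod M1\<^esub> T) = \<gamma>1 S \<otimes>\<^bsub>AX1 Mod N1\<^esub> \<gamma>1 T"
      using ST a b gcos by simp
  qed
  thus ?thesis
    using normal.factorgroup_is_group[OF M1_normal] normal.factorgroup_is_group[OF N1_normal]
    by (simp add: group_hom_def group_hom_axioms_def)
qed

lemma sN1: "subgroup N1 AX1" using N1_normal by (simp add: normal_def)
lemma sM1: "subgroup M1 AY1" using M1_normal by (simp add: normal_def)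

lemma g1_iso: "\<gamma>1 \<in> iso (AY1 Mod M1) (AX1 Mod N1)"
  unfolding group_hom.iso_iff[OF g1_hom]
proof (intro conjI ballI impI)
  show "carrier (AX1 Mod N1) \<subseteq> \<gamma>1 ` carrier (AY1 Mod M1)"
    using gcos carrX1 carrY1 by auto
next
  fix S assume S: "S \<in> carrier (AY1 Mod M1)" and e: "\<gamma>1 S = \<one>\<^bsub>AX1 Mod N1\<^esub>"
  then obtain a where a: "a \<in> carrier K" "S = r_coset A M1 (lm a)" using carrY1 by auto
  have "r_coset A N1 (rh a) = N1" using e a gcos by simp
  moreover have "rh a \<in> r_coset A N1 (rh a)"
    using group.rcos_self[OF gAX1 _ sN1, of "rh a"] a by (simp add: rcX1 X1_def)
  ultimately have "rh a \<in> N1" by simp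
  then obtain i where i: "i \<in> kl" "rh a = rh i" by (auto simp: N1_def)
  have ic: "i \<in> carrier K" using i kl_sub by blast
  have k: "a \<otimes>\<^bsub>C\<^esub> inv\<^bsub>C\<^esub> i \<in> kr" using rh_eq_kr a ic i by simp
  have "lm (a \<otimes>\<^bsub>C\<^esub> inv\<^bsub>C\<^esub> i) = lm a" using a ic i by (simp add: lm_mult lm_invC kl_def)
  hence "lm a \<in> M1" using k by (auto simp: M1_def intro: image_eqI[where x="a \<otimes>\<^bsub>C\<^esub> inv\<^bsub>C\<^esub> i"])
  hence "r_coset AY1 M1 (lm a) = M1"
    using group.coset_join2[OF gAY1 _ sM1] a by (simp add: Y1_def)
  thus "S = \<one>\<^bsub>AY1 Mod M1\<^esub>" using a by (simp add: rcY1)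
qed

lemma c1': assumes x: "x \<in> X1" and y: "y \<in> Y1" and e: "\<gamma>1 (r_coset A M1 y) = r_coset A N1 x"
  shows "x \<otimes>\<^bsub>A\<^esub> inv\<^bsub>A\<^esub> y \<in> inn K"
proof -
  obtain a where a: "a \<in> carrier K" "y = lm a" using y by (auto simp: Y1_def)
  have "r_coset A N1 (rh a) = r_coset A N1 x" using e a gcos by simp
  moreover have "x \<in> r_coset A N1 x" using group.rcos_self[OF gAX1 _ sN1, of x] x by (simp add: rcX1)
  ultimately have "x \<in> r_coset A N1 (rh a)" by simp
  then obtain i where i: "i \<in> kl" "x = rh i \<otimes>\<^bsub>A\<^esub> rh a" by (auto simp: mem_rcA N1_def)
  have ic: "i \<in> carrier K" using i kl_sub by blast
  have c: "i \<otimes>\<^bsub>C\<^esub> a \<in> carrier K" using ic a by simp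
  have "x = rh (i \<otimes>\<^bsub>C\<^esub> a)" using i ic a by (simp add: rh_mult)
  moreover have "y = lm (i \<otimes>\<^bsub>C\<^esub> a)" using i ic a by (simp add: lm_mult kl_def)
  ultimately have "x \<otimes>\<^bsub>A\<^esub> inv\<^bsub>A\<^esub> y = cj (i \<otimes>\<^bsub>C\<^esub> a)" using cj_rh[OF c] by simp
  thus ?thesis using c by (simp add: cj_in_inn)
qed

lemma c2': assumes z: "z \<in> inn K"
  shows "\<exists>x \<in> X1. \<exists>y \<in> Y1. r_coset A N1 x = \<gamma>1 (r_coset A M1 y) \<and> x \<otimes>\<^bsub>A\<^esub> inv\<^bsub>A\<^esub> y = z"
proof -
  obtain k where k: "k \<in> carrier K" "z = cj k" using z by (auto simp: inn_eq)
  show ?thesis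
    by (rule bexI[of _ "rh k"], rule bexI[of _ "lm k"]) (use k gcos cj_rh in \<open>auto simp: X1_def Y1_def\<close>)
qed

lemma lm_mult': "a \<in> carrier K \<Longrightarrow> b \<in> carrier K \<Longrightarrow> lm (a \<otimes> lm a b) = lm a \<otimes>\<^bsub>A\<^esub> lm b"
  using lm_mult multC by metis

lemmas ev_simps = rh_eq lm_mult' multC lm_invC m_assoc inv_mult_group

lemma eqa1: "a \<in> carrier K \<Longrightarrow> b \<in> carrier K \<Longrightarrow>
   rh a \<otimes>\<^bsub>A\<^esub> lm b = rh (a \<otimes>\<^bsub>C\<^esub> b) \<otimes>\<^bsub>A\<^esub> cj ((inv\<^bsub>A\<^esub> (lm b)) (inv b))"
  by (intro auto_ext) (simp_all del: lm_apply add: ev_simps)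

lemma eqa2: "a \<in> carrier K \<Longrightarrow> k \<in> carrier K \<Longrightarrow>
   rh a \<otimes>\<^bsub>A\<^esub> cj k = rh (a \<otimes>\<^bsub>C\<^esub> k) \<otimes>\<^bsub>A\<^esub> lm (inv\<^bsub>C\<^esub> k)"
  by (intro auto_ext) (simp_all del: lm_apply add: ev_simps)

lemma eqa3: "a \<in> carrier K \<Longrightarrow> k \<in> carrier K \<Longrightarrow>
   lm a \<otimes>\<^bsub>A\<^esub> cj k = rh (lm a k) \<otimes>\<^bsub>A\<^esub> lm (inv\<^bsub>C\<^esub> (lm a k) \<otimes>\<^bsub>C\<^esub> a)"
proof -
  assume a: "a \<in> carrier K" and k: "k \<in> carrier K"
  have m: "lm a k \<in> carrier K" using a k by (simp del: lm_apply)
  have "lm (inv\<^bsub>C\<^esub> (lm a k) \<otimes>\<^bsub>C\<^esub> a) = inv\<^bsub>A\<^esub> (lm (lm a k)) \<otimes>\<^bsub>A\<^esub> lm a"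
    using a m by (simp del: lm_apply add: lm_mult lm_invC)
  thus ?thesis using a k m
    by (intro auto_ext) (simp_all del: lm_apply add: ev_simps)
qed

lemma eqa4: "a \<in> carrier K \<Longrightarrow> b \<in> carrier K \<Longrightarrow>
   rh a \<otimes>\<^bsub>A\<^esub> lm b = lm (a \<otimes>\<^bsub>C\<^esub> b) \<otimes>\<^bsub>A\<^esub> cj ((inv\<^bsub>A\<^esub> (lm (a \<otimes>\<^bsub>C\<^esub> b))) a)"
  by (intro auto_ext) (simp_all del: lm_apply add: ev_simps)

lemma inv_lm_closed: "b \<in> carrier K \<Longrightarrow> c \<in> carrier K \<Longrightarrow> (inv\<^bsub>A\<^esub> (lm b)) c \<in> carrier K"
  by simp

lemma XY_XI: "set_mult A X1 Y1 \<subseteq> set_mult A X1 (inn K)"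
proof
  fix z assume "z \<in> set_mult A X1 Y1"
  then obtain a b where ab: "a \<in> carrier K" "b \<in> carrier K" "z = rh a \<otimes>\<^bsub>A\<^esub> lm b"
    by (auto simp: set_mult_def X1_def Y1_def)
  hence "z = rh (a \<otimes>\<^bsub>C\<^esub> b) \<otimes>\<^bsub>A\<^esub> cj ((inv\<^bsub>A\<^esub> (lm b)) (inv b))" using eqa1 by simp
  moreover have "rh (a \<otimes>\<^bsub>C\<^esub> b) \<in> X1" using ab by (simp add: X1_def)
  moreover have "cj ((inv\<^bsub>A\<^esub> (lm b)) (inv b)) \<in> inn K" using ab by (simp add: cj_in_inn del: lm_apply)
  ultimately show "z \<in> set_mult A X1 (inn K)" by (auto simp: set_mult_def)
qed

lemma XI_XY: "set_mult A X1 (inn K) \<subseteq> set_mult A X1 Y1"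
proof
  fix z assume "z \<in> set_mult A X1 (inn K)"
  then obtain a k where ak: "a \<in> carrier K" "k \<in> carrier K" "z = rh a \<otimes>\<^bsub>A\<^esub> cj k"
    by (auto simp: set_mult_def X1_def inn_eq)
  hence "z = rh (a \<otimes>\<^bsub>C\<^esub> k) \<otimes>\<^bsub>A\<^esub> lm (inv\<^bsub>C\<^esub> k)" using eqa2 by simp
  moreover have "rh (a \<otimes>\<^bsub>C\<^esub> k) \<in> X1" using ak by (simp add: X1_def)
  moreover have "lm (inv\<^bsub>C\<^esub> k) \<in> Y1" using ak by (simp add: Y1_def)
  ultimately show "z \<in> set_mult A X1 Y1" by (auto simp: set_mult_def)
qed

lemma YI_XY: "set_mult A Y1 (inn K) \<subseteq> set_mult A X1 Y1"
proof
  fix z assume "z \<in> set_mult A Y1 (inn K)"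
  then obtain a k where ak: "a \<in> carrier K" "k \<in> carrier K" "z = lm a \<otimes>\<^bsub>A\<^esub> cj k"
    by (auto simp: set_mult_def Y1_def inn_eq)
  have m: "lm a k \<in> carrier K" using ak by (simp del: lm_apply)
  have "z = rh (lm a k) \<otimes>\<^bsub>A\<^esub> lm (inv\<^bsub>C\<^esub> (lm a k) \<otimes>\<^bsub>C\<^esub> a)" using eqa3 ak by simp
  moreover have "rh (lm a k) \<in> X1" using m by (simp add: X1_def del: lm_apply)
  moreover have "lm (inv\<^bsub>C\<^esub> (lm a k) \<otimes>\<^bsub>C\<^esub> a) \<in> Y1" using m ak by (simp add: Y1_def del: lm_apply)
  ultimately show "z \<in> set_mult A X1 Y1" by (auto simp: set_mult_def)
qed

lemma XY_YI: "set_mult A X1 Y1 \<subseteq> set_mult A Y1 (inn K)"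
proof
  fix z assume "z \<in> set_mult A X1 Y1"
  then obtain a b where ab: "a \<in> carrier K" "b \<in> carrier K" "z = rh a \<otimes>\<^bsub>A\<^esub> lm b"
    by (auto simp: set_mult_def X1_def Y1_def)
  hence "z = lm (a \<otimes>\<^bsub>C\<^esub> b) \<otimes>\<^bsub>A\<^esub> cj ((inv\<^bsub>A\<^esub> (lm (a \<otimes>\<^bsub>C\<^esub> b))) a)" using eqa4 by simp
  moreover have "lm (a \<otimes>\<^bsub>C\<^esub> b) \<in> Y1" using ab by (simp add: Y1_def)
  moreover have "cj ((inv\<^bsub>A\<^esub> (lm (a \<otimes>\<^bsub>C\<^esub> b))) a) \<in> inn K"
    using ab by (intro cj_in_inn) (simp del: lm_apply)
  ultimately show "z \<in> set_mult A Y1 (inn K)" by (auto simp: set_mult_def)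
qed

lemma card_X1: "card X1 * card kr = card (carrier K)"
proof -
  have "card (carrier (C Mod kernel C AX1 rh)) = card X1"
    using iso_same_card[OF group_hom.FactGroup_iso[OF gh_rhX rh_surj]] by simp
  hence "card (rcosets\<^bsub>C\<^esub> kr) = card X1" by (simp add: FactGroup_def ker_rh)
  thus ?thesis using CG.lagrange[OF skr] by (simp add: order_def)
qed

lemma card_Y1: "card Y1 * card kl = card (carrier K)"
proof -
  have "card (carrier (C Mod kernel C AY1 lm)) = card Y1"
    using iso_same_card[OF group_hom.FactGroup_iso[OF gh_lmY lm_surj]] by simp
  hence "card (rcosets\<^bsub>C\<^esub> kl) = card Y1" by (simp add: FactGroup_def ker_lm)
  thus ?thesis using CG.lagrange[OF skl] by (simp add: order_def)
qed

lemma card_M1: "card M1 = card kr"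
proof -
  have "inj_on lm kr"
  proof (rule inj_onI)
    fix a b assume a: "a \<in> kr" and b: "b \<in> kr" and e: "lm a = lm b"
    have ac: "a \<in> carrier K" and bc: "b \<in> carrier K" using a b kr_sub by auto
    have "a \<otimes>\<^bsub>C\<^esub> inv\<^bsub>C\<^esub> b \<in> kl" using lm_eq_kl ac bc e by blast
    moreover have "a \<otimes>\<^bsub>C\<^esub> inv\<^bsub>C\<^esub> b \<in> kr" using rh_eq_kr ac bc a b by (simp add: kr_def)
    ultimately have "a \<otimes>\<^bsub>C\<^esub> inv\<^bsub>C\<^esub> b = \<one>\<^bsub>C\<^esub>" using kl_kr oneC by simp
    thus "a = b" using ac bc CG.inv_solve_right'[of "\<one>\<^bsub>C\<^esub>" a b] CG.one_closed by simp
  qed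
  thus ?thesis by (simp add: M1_def card_image)
qed

lemma card_N1: "card N1 = card kl"
proof -
  have "inj_on rh kl"
  proof (rule inj_onI)
    fix a b assume a: "a \<in> kl" and b: "b \<in> kl" and e: "rh a = rh b"
    have ac: "a \<in> carrier K" and bc: "b \<in> carrier K" using a b kl_sub by auto
    have "a \<otimes>\<^bsub>C\<^esub> inv\<^bsub>C\<^esub> b \<in> kr" using rh_eq_kr ac bc e by blast
    moreover have "a \<otimes>\<^bsub>C\<^esub> inv\<^bsub>C\<^esub> b \<in> kl" using lm_eq_kl ac bc a b by (simp add: kl_def)
    ultimately have "a \<otimes>\<^bsub>C\<^esub> inv\<^bsub>C\<^esub> b = \<one>\<^bsub>C\<^esub>" using kl_kr oneC by simp
    thus "a = b" using ac bc CG.inv_solve_right'[of "\<one>\<^bsub>C\<^esub>" a b] CG.one_closed by simp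
  qed
  thus ?thesis by (simp add: N1_def card_image)
qed

lemma p1_cond: "aut_conditions K X1 Y1 N1 M1 \<gamma>1"
  unfolding aut_conditions_def
proof (intro conjI)
  show "set_mult A X1 Y1 = set_mult A X1 (inn K)" using XY_XI XI_XY by blast
  show "set_mult A Y1 (inn K) = set_mult A X1 Y1" using XY_YI YI_XY by blast
  show "N1 \<subseteq> inn K" by (rule N1_inn)
  show "M1 \<subseteq> inn K" by (rule M1_inn)
  show "N1 \<lhd> AX1" by (rule N1_normal)
  show "M1 \<lhd> AY1" by (rule M1_normal)
  show "\<gamma>1 \<in> iso (AY1 Mod M1) (AX1 Mod N1)" by (rule g1_iso)
  show "\<forall>x\<in>X1. \<forall>y\<in>Y1. \<gamma>1 (r_coset A M1 y) = r_coset A N1 x \<longrightarrow> x \<otimes>\<^bsub>A\<^esub> inv\<^bsub>A\<^esub> y \<in> inn K"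
    using c1' by blast
  show "\<forall>z\<in>inn K. \<exists>x\<in>X1. \<exists>y\<in>Y1. r_coset A N1 x = \<gamma>1 (r_coset A M1 y) \<and> x \<otimes>\<^bsub>A\<^esub> inv\<^bsub>A\<^esub> y = z"
    using c2' by blast
  show "card (carrier K) = card X1 * card M1" using card_X1 card_M1 by simp
  show "card (carrier K) = card Y1 * card N1" using card_Y1 card_N1 by simp
qed

lemma p1_main: "\<exists>X Y. subgroup X (AutoGroup K) \<and> subgroup Y (AutoGroup K) \<and>
               (\<exists>N M \<gamma>. aut_conditions K X Y N M \<gamma>) \<and>
               (\<exists>T V. normal T C \<and> normal V C \<and> T \<inter> V = {\<one>\<^bsub>C\<^esub>} \<and>
                  (AutoGroup K)\<lparr>carrier := X\<rparr> \<cong> C Mod T \<and>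
                  (AutoGroup K)\<lparr>carrier := Y\<rparr> \<cong> C Mod V)"
proof -
  have "C Mod kr \<cong> AX1" using group_hom.FactGroup_iso[OF gh_rhX rh_surj] by (simp only: ker_rh)
  hence iX: "AX1 \<cong> C Mod kr" by (rule group.iso_sym[OF normal.factorgroup_is_group[OF nkr]])
  have "C Mod kl \<cong> AY1" using group_hom.FactGroup_iso[OF gh_lmY lm_surj] by (simp only: ker_lm)
  hence iY: "AY1 \<cong> C Mod kl" by (rule group.iso_sym[OF normal.factorgroup_is_group[OF nkl]])
  have int: "kr \<inter> kl = {\<one>\<^bsub>C\<^esub>}"
  proof (intro equalityI subsetI)
    fix x assume "x \<in> kr \<inter> kl" thus "x \<in> {\<one>\<^bsub>C\<^esub>}" using kl_kr oneC by simp
  next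
    fix x assume "x \<in> {\<one>\<^bsub>C\<^esub>}" thus "x \<in> kr \<inter> kl" using one_kl one_kr oneC by simp
  qed
  show ?thesis
    apply (rule exI[of _ X1], rule exI[of _ Y1])
    using subX1 subY1 p1_cond nkr nkl int iX iY by blast
qed

end


locale p2 = zk +
  fixes X Y N M :: "('a \<Rightarrow> 'a) set" and \<gamma> :: "('a \<Rightarrow> 'a) set \<Rightarrow> ('a \<Rightarrow> 'a) set"
  assumes subX: "subgroup X (AutoGroup K)" and subY: "subgroup Y (AutoGroup K)"
    and cond: "aut_conditions K X Y N M \<gamma>"
begin

abbreviation "AX \<equiv> (AutoGroup K)\<lparr>carrier := X\<rparr>"
abbreviation "AY \<equiv> (AutoGroup K)\<lparr>carrier := Y\<rparr>"

lemma gAX: "group AX" by (rule subgroup.subgroup_is_group[OF subX AutoGroup])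
lemma gAY: "group AY" by (rule subgroup.subgroup_is_group[OF subY AutoGroup])

lemma nN: "normal N AX" and nM: "normal M AY"
  and giso: "\<gamma> \<in> iso (AY Mod M) (AX Mod N)"
  and c1: "\<And>x y. x \<in> X \<Longrightarrow> y \<in> Y \<Longrightarrow> \<gamma> (r_coset A M y) = r_coset A N x \<Longrightarrow> x \<otimes>\<^bsub>A\<^esub> inv\<^bsub>A\<^esub> y \<in> inn K"
  and c2: "\<And>z. z \<in> inn K \<Longrightarrow> \<exists>x \<in> X. \<exists>y \<in> Y. r_coset A N x = \<gamma> (r_coset A M y) \<and> x \<otimes>\<^bsub>A\<^esub> inv\<^bsub>A\<^esub> y = z"
  and ccard: "card (carrier K) = card Y * card N"
  using cond unfolding aut_conditions_def by blast+

lemma XA: "X \<subseteq> auto K" using subgroup.subset[OF subX] by simp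
lemma YA: "Y \<subseteq> auto K" using subgroup.subset[OF subY] by simp

lemma sNX: "subgroup N AX" using nN by (simp add: normal_def)
lemma sMY: "subgroup M AY" using nM by (simp add: normal_def)
lemma NX: "N \<subseteq> X" using subgroup.subset[OF sNX] by simp
lemma MY: "M \<subseteq> Y" using subgroup.subset[OF sMY] by simp

lemma rcX: "r_coset AX S a = r_coset A S a" by (simp add: r_coset_def)
lemma rcY: "r_coset AY S a = r_coset A S a" by (simp add: r_coset_def)
lemma smX: "set_mult AX S T = set_mult A S T" by (simp add: set_mult_def)
lemma smY: "set_mult AY S T = set_mult A S T" by (simp add: set_mult_def)

lemma ghom: "group_hom (AY Mod M) (AX Mod N) \<gamma>"
  using giso normal.factorgroup_is_group[OF nM] normal.factorgroup_is_group[OF nN]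
  by (simp add: group_hom_def group_hom_axioms_def iso_def)

lemma carrY: "carrier (AY Mod M) = (\<lambda>y. r_coset A M y) ` Y"
  by (simp add: carrier_FactGroup rcY)
lemma carrX: "carrier (AX Mod N) = (\<lambda>x. r_coset A N x) ` X"
  by (simp add: carrier_FactGroup rcX)

lemma gam_coset: "y \<in> Y \<Longrightarrow> \<exists>x\<in>X. \<gamma> (r_coset A M y) = r_coset A N x"
proof -
  assume y: "y \<in> Y"
  have "r_coset A M y \<in> carrier (AY Mod M)" using y carrY by blast
  hence "\<gamma> (r_coset A M y) \<in> carrier (AX Mod N)"
    using giso by (auto simp: iso_def hom_def)
  thus ?thesis using carrX by auto
qed

lemma gam_surj: "x \<in> X \<Longrightarrow> \<exists>y\<in>Y. \<gamma> (r_coset A M y) = r_coset A N x"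
proof -
  assume x: "x \<in> X"
  have "r_coset A N x \<in> carrier (AX Mod N)" using x carrX by blast
  hence "r_coset A N x \<in> \<gamma> ` carrier (AY Mod M)"
    using giso by (auto simp: iso_def bij_betw_def)
  thus ?thesis using carrY by auto
qed

lemma Ncos_eq: "x \<in> X \<Longrightarrow> x0 \<in> X \<Longrightarrow> (x \<in> r_coset A N x0) = (r_coset A N x = r_coset A N x0)"
  using group.repr_independence[OF gAX, of x N x0] group.rcos_self[OF gAX, of x N] sNX
  by (auto simp: rcX)

lemma Ncos_sub: "x0 \<in> X \<Longrightarrow> r_coset A N x0 \<subseteq> X"
  using monoid.r_coset_subset_G[OF group.is_monoid[OF gAX], of N x0] NX by (simp add: rcX)

lemma Ncos_card: "x0 \<in> X \<Longrightarrow> card (r_coset A N x0) = card N"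
proof -
  assume x0: "x0 \<in> X"
  have "r_coset A N x0 \<in> rcosets\<^bsub>AX\<^esub> N" using x0 by (auto simp: RCOSETS_def rcX)
  thus ?thesis using group.card_rcosets_equal[OF gAX, of "r_coset A N x0" N] NX by simp
qed

definition Cset :: "(('a \<Rightarrow> 'a) \<times> ('a \<Rightarrow> 'a)) set" where
  "Cset = {(y, x). y \<in> Y \<and> x \<in> X \<and> r_coset A N x = \<gamma> (r_coset A M y)}"

lemma Cset_mem: "(y, x) \<in> Cset \<longleftrightarrow> y \<in> Y \<and> x \<in> \<gamma> (r_coset A M y)"
proof (cases "y \<in> Y")
  case True
  then obtain x0 where x0: "x0 \<in> X" "\<gamma> (r_coset A M y) = r_coset A N x0" using gam_coset by blast
  show ?thesis using x0 Ncos_sub[OF x0(1)] Ncos_eq[OF _ x0(1), of x] True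
    by (auto simp: Cset_def)
qed (auto simp: Cset_def)

lemma Cset_Sigma: "Cset = Sigma Y (\<lambda>y. \<gamma> (r_coset A M y))"
  by (auto simp: Cset_mem)

lemma finY: "finite Y" using YA finite_auto finite_subset by blast
lemma finX: "finite X" using XA finite_auto finite_subset by blast

lemma card_Cset: "card Cset = card (carrier K)"
proof -
  have "card Cset = (\<Sum>y\<in>Y. card (\<gamma> (r_coset A M y)))"
    unfolding Cset_Sigma
    by (rule card_SigmaI[OF finY]) (use finX Ncos_sub gam_coset in \<open>metis finite_subset\<close>)
  also have "\<dots> = (\<Sum>y\<in>Y. card N)"
    by (rule sum.cong) (auto dest!: gam_coset simp: Ncos_card)
  finally show ?thesis using ccard by (simp add: mult.commute)
qed

lemma finCset: "finite Cset"
  unfolding Cset_Sigma using finX finY Ncos_sub gam_coset by (metis finite_SigmaI finite_subset)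

definition Phi :: "(('a \<Rightarrow> 'a) \<times> ('a \<Rightarrow> 'a)) \<Rightarrow> 'a" where
  "Phi p = inv_into (carrier K) cj (snd p \<otimes>\<^bsub>A\<^esub> inv\<^bsub>A\<^esub> (fst p))"

lemma cj_inj_on: "inj_on cj (carrier K)" by (auto intro: inj_onI cj_inj)

lemma Phi_cj: "k \<in> carrier K \<Longrightarrow> x \<otimes>\<^bsub>A\<^esub> inv\<^bsub>A\<^esub> y = cj k \<Longrightarrow> Phi (y, x) = k"
  by (simp add: Phi_def inv_into_f_f[OF cj_inj_on])

lemma Cset_inn: "(y, x) \<in> Cset \<Longrightarrow> \<exists>k\<in>carrier K. x \<otimes>\<^bsub>A\<^esub> inv\<^bsub>A\<^esub> y = cj k"
  using c1[of x y] by (auto simp: Cset_def inn_eq)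

lemma Phi_img: "Phi ` Cset = carrier K"
proof
  show "Phi ` Cset \<subseteq> carrier K"
  proof
    fix k assume "k \<in> Phi ` Cset"
    then obtain p where p: "p \<in> Cset" "k = Phi p" by blast
    obtain y x where yx: "p = (y, x)" by (cases p)
    obtain k' where "k' \<in> carrier K" "x \<otimes>\<^bsub>A\<^esub> inv\<^bsub>A\<^esub> y = cj k'" using Cset_inn p yx by blast
    thus "k \<in> carrier K" using Phi_cj p yx by simp
  qed
  show "carrier K \<subseteq> Phi ` Cset"
  proof
    fix k assume k: "k \<in> carrier K"
    obtain x y where "x \<in> X" "y \<in> Y" "r_coset A N x = \<gamma> (r_coset A M y)" "x \<otimes>\<^bsub>A\<^esub> inv\<^bsub>A\<^esub> y = cj k"
      using c2[of "cj k"] k by (auto simp: inn_eq)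
    hence "(y, x) \<in> Cset" "Phi (y, x) = k" using Phi_cj[OF k] by (auto simp: Cset_def)
    thus "k \<in> Phi ` Cset" by (metis image_eqI)
  qed
qed

lemma Phi_inj: "inj_on Phi Cset"
  by (rule eq_card_imp_inj_on[OF finCset]) (simp add: Phi_img card_Cset)

definition pr :: "'a \<Rightarrow> ('a \<Rightarrow> 'a) \<times> ('a \<Rightarrow> 'a)" where
  "pr k = inv_into Cset Phi k"
definition lam where "lam k = fst (pr k)"
definition xi where "xi k = snd (pr k)"

lemma pr_in: "k \<in> carrier K \<Longrightarrow> pr k \<in> Cset"
  unfolding pr_def by (rule inv_into_into) (simp add: Phi_img)

lemma pr_Phi: "k \<in> carrier K \<Longrightarrow> Phi (pr k) = k"
  unfolding pr_def by (rule f_inv_into_f) (simp add: Phi_img)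

lemma pr_uniq: "(y, x) \<in> Cset \<Longrightarrow> k \<in> carrier K \<Longrightarrow> x \<otimes>\<^bsub>A\<^esub> inv\<^bsub>A\<^esub> y = cj k \<Longrightarrow> pr k = (y, x)"
  unfolding pr_def using Phi_cj inv_into_f_f[OF Phi_inj] by metis

lemma lam_Y: assumes "k \<in> carrier K" shows "lam k \<in> Y"
  using pr_in[OF assms] unfolding lam_def Cset_def by (cases "pr k") auto
lemma xi_X: assumes "k \<in> carrier K" shows "xi k \<in> X"
  using pr_in[OF assms] unfolding xi_def Cset_def by (cases "pr k") auto
lemma lam_A[simp]: "k \<in> carrier K \<Longrightarrow> lam k \<in> auto K" using lam_Y YA by blast
lemma xi_A[simp]: "k \<in> carrier K \<Longrightarrow> xi k \<in> auto K" using xi_X XA by blast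

lemma pr_eq: "k \<in> carrier K \<Longrightarrow> pr k = (lam k, xi k)" by (simp add: lam_def xi_def)

lemma xi_lam: "k \<in> carrier K \<Longrightarrow> xi k \<otimes>\<^bsub>A\<^esub> inv\<^bsub>A\<^esub> lam k = cj k"
proof -
  assume k: "k \<in> carrier K"
  obtain k' where k': "k' \<in> carrier K" "xi k \<otimes>\<^bsub>A\<^esub> inv\<^bsub>A\<^esub> lam k = cj k'"
    using Cset_inn pr_in[OF k] by (metis pr_eq[OF k])
  have "Phi (pr k) = k'" using Phi_cj[OF k'(1) k'(2)] by (simp add: pr_eq[OF k])
  thus ?thesis using pr_Phi[OF k] k' by simp
qed

lemma xi_eq: "k \<in> carrier K \<Longrightarrow> xi k = cj k \<otimes>\<^bsub>A\<^esub> lam k"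
  using xi_lam[of k] by (simp add: AG.inv_solve_right')

lemma Cset_mult:
  assumes p1: "(y1, x1) \<in> Cset" and p2: "(y2, x2) \<in> Cset"
  shows "(y1 \<otimes>\<^bsub>A\<^esub> y2, x1 \<otimes>\<^bsub>A\<^esub> x2) \<in> Cset"
proof -
  have y: "y1 \<in> Y" "y2 \<in> Y" and x: "x1 \<in> X" "x2 \<in> X"
    and e1: "r_coset A N x1 = \<gamma> (r_coset A M y1)" and e2: "r_coset A N x2 = \<gamma> (r_coset A M y2)"
    using p1 p2 by (auto simp: Cset_def)
  have yy: "y1 \<otimes>\<^bsub>A\<^esub> y2 \<in> Y" using subgroup.m_closed[OF subY] y by blast
  have xx: "x1 \<otimes>\<^bsub>A\<^esub> x2 \<in> X" using subgroup.m_closed[OF subX] x by blast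
  have "r_coset A M (y1 \<otimes>\<^bsub>A\<^esub> y2) = set_mult A (r_coset A M y1) (r_coset A M y2)"
    using normal.rcos_sum[OF nM, of y1 y2] y by (simp add: rcY smY)
  hence "\<gamma> (r_coset A M (y1 \<otimes>\<^bsub>A\<^esub> y2)) = set_mult A (\<gamma> (r_coset A M y1)) (\<gamma> (r_coset A M y2))"
    using group_hom.hom_mult[OF ghom, of "r_coset A M y1" "r_coset A M y2"] y carrY
    by (simp add: smX smY)
  also have "\<dots> = r_coset A N (x1 \<otimes>\<^bsub>A\<^esub> x2)"
    using normal.rcos_sum[OF nN, of x1 x2] x by (simp add: rcX smX e1 e2)
  finally show ?thesis using yy xx by (simp add: Cset_def)
qed

lemma pr_mult:
  assumes a: "a \<in> carrier K" and b: "b \<in> carrier K"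
  shows "pr (a \<otimes> lam a b) = (lam a \<otimes>\<^bsub>A\<^esub> lam b, xi a \<otimes>\<^bsub>A\<^esub> xi b)"
proof (rule pr_uniq)
  show "(lam a \<otimes>\<^bsub>A\<^esub> lam b, xi a \<otimes>\<^bsub>A\<^esub> xi b) \<in> Cset"
    using Cset_mult pr_in[OF a] pr_in[OF b] by (simp add: pr_eq a b)
  show c: "a \<otimes> lam a b \<in> carrier K" using a b by simp
  have "xi a \<otimes>\<^bsub>A\<^esub> xi b = cj (a \<otimes> lam a b) \<otimes>\<^bsub>A\<^esub> (lam a \<otimes>\<^bsub>A\<^esub> lam b)"
    by (rule auto_ext) (simp_all add: a b xi_eq m_assoc inv_mult_group)
  thus "xi a \<otimes>\<^bsub>A\<^esub> xi b \<otimes>\<^bsub>A\<^esub> inv\<^bsub>A\<^esub> (lam a \<otimes>\<^bsub>A\<^esub> lam b) = cj (a \<otimes> lam a b)"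
    using a b c by (simp add: AG.inv_solve_right')
qed

lemma lam_mult: "a \<in> carrier K \<Longrightarrow> b \<in> carrier K \<Longrightarrow> lam (a \<otimes> lam a b) = lam a \<otimes>\<^bsub>A\<^esub> lam b"
  using pr_mult by (simp add: lam_def)
lemma xi_mult: "a \<in> carrier K \<Longrightarrow> b \<in> carrier K \<Longrightarrow> xi (a \<otimes> lam a b) = xi a \<otimes>\<^bsub>A\<^esub> xi b"
  using pr_mult by (simp add: xi_def)

lemma pr_one: "pr \<one> = (\<one>\<^bsub>A\<^esub>, \<one>\<^bsub>A\<^esub>)"
proof (rule pr_uniq)
  have o: "\<one>\<^bsub>A\<^esub> \<in> X" "\<one>\<^bsub>A\<^esub> \<in> Y" using subgroup.one_closed[OF subX] subgroup.one_closed[OF subY] by auto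
  have "r_coset A M \<one>\<^bsub>A\<^esub> = M" using AG.coset_mult_one[of M] MY YA by simp
  moreover have "r_coset A N \<one>\<^bsub>A\<^esub> = N" using AG.coset_mult_one[of N] NX XA by simp
  moreover have "\<gamma> M = N" using group_hom.hom_one[OF ghom] by simp
  ultimately show "(\<one>\<^bsub>A\<^esub>, \<one>\<^bsub>A\<^esub>) \<in> Cset" using o by (simp add: Cset_def)
  show "\<one>\<^bsub>A\<^esub> \<otimes>\<^bsub>A\<^esub> inv\<^bsub>A\<^esub> \<one>\<^bsub>A\<^esub> = cj \<one>" by (simp add: cj_one)
qed simp

lemma lam_one: "lam \<one> = \<one>\<^bsub>A\<^esub>" and xi_one: "xi \<one> = \<one>\<^bsub>A\<^esub>"
  using pr_one by (simp_all add: lam_def xi_def)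

definition mC :: "'a \<Rightarrow> 'a \<Rightarrow> 'a" where "mC a b = a \<otimes> lam a b"

definition CC :: "'a monoid" where
  "CC = \<lparr>carrier = carrier K, mult = mC, one = \<one>\<rparr>"

lemma mC_closed: "a \<in> carrier K \<Longrightarrow> b \<in> carrier K \<Longrightarrow> mC a b \<in> carrier K"
  by (simp add: mC_def)

lemma mC_assoc: "a \<in> carrier K \<Longrightarrow> b \<in> carrier K \<Longrightarrow> c \<in> carrier K \<Longrightarrow> mC (mC a b) c = mC a (mC b c)"
  by (simp add: mC_def lam_mult m_assoc)

lemma mC_lone: "a \<in> carrier K \<Longrightarrow> mC \<one> a = a"
  by (simp add: mC_def lam_one)

lemma mC_rone: "a \<in> carrier K \<Longrightarrow> mC a \<one> = a"
  by (simp add: mC_def)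

definition rinv where "rinv a = (inv\<^bsub>A\<^esub> (lam a)) (inv a)"

lemma rinv_closed: "a \<in> carrier K \<Longrightarrow> rinv a \<in> carrier K"
  by (simp add: rinv_def)

lemma rinv_r: "a \<in> carrier K \<Longrightarrow> mC a (rinv a) = \<one>"
  by (simp add: rinv_def mC_def)

lemma rinv_l: assumes a: "a \<in> carrier K" shows "mC (rinv a) a = \<one>"
proof -
  let ?r = "rinv a" let ?rr = "rinv (rinv a)"
  have r: "?r \<in> carrier K" and rr: "?rr \<in> carrier K" using a by (simp_all add: rinv_closed)
  have "mC ?r a = mC (mC ?r a) (mC ?r ?rr)" using rinv_r[OF r] mC_rone a r by (simp add: mC_closed)
  also have "\<dots> = mC ?r (mC (mC a ?r) ?rr)" using a r rr by (simp add: mC_assoc mC_closed)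
  also have "\<dots> = \<one>" using a r rr by (simp add: rinv_r mC_lone)
  finally show ?thesis .
qed

lemma CC_group: "group CC"
  unfolding CC_def
  by (rule groupI) (auto simp: mC_closed mC_assoc mC_lone intro!: bexI[of _ "rinv _"] rinv_l rinv_closed)

lemma CC_brace: "skew_brace_mult K CC"
  unfolding skew_brace_mult_def using CC_group
  by (simp add: CC_def mC_def m_assoc)

lemma hom_xi: "xi \<in> hom CC AX"
  by (auto simp: hom_def CC_def mC_def xi_X xi_mult)
lemma hom_lam: "lam \<in> hom CC AY"
  by (auto simp: hom_def CC_def mC_def lam_Y lam_mult)

lemma gh_xi: "group_hom CC AX xi"
  using CC_group gAX hom_xi by (simp add: group_hom_def group_hom_axioms_def)
lemma gh_lam: "group_hom CC AY lam"
  using CC_group gAY hom_lam by (simp add: group_hom_def group_hom_axioms_def)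

lemma Cset_pr: assumes "(y, x) \<in> Cset" shows "\<exists>k\<in>carrier K. lam k = y \<and> xi k = x"
proof -
  obtain k where k: "k \<in> carrier K" "x \<otimes>\<^bsub>A\<^esub> inv\<^bsub>A\<^esub> y = cj k" using Cset_inn[OF assms] by blast
  hence "pr k = (y, x)" using pr_uniq[OF assms] by blast
  hence "lam k = y \<and> xi k = x" by (simp add: lam_def xi_def)
  thus ?thesis using k by blast
qed

lemma lam_surj: "lam ` carrier CC = carrier AY"
proof
  show "lam ` carrier CC \<subseteq> carrier AY" using lam_Y by (auto simp: CC_def)
  show "carrier AY \<subseteq> lam ` carrier CC"
  proof
    fix y assume "y \<in> carrier AY"
    hence y: "y \<in> Y" by simp
    then obtain x0 where x0: "x0 \<in> X" "\<gamma> (r_coset A M y) = r_coset A N x0" using gam_coset by blast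
    hence "(y, x0) \<in> Cset" using y by (simp add: Cset_def)
    then obtain k where "k \<in> carrier K" "lam k = y" using Cset_pr by blast
    thus "y \<in> lam ` carrier CC" by (auto simp: CC_def)
  qed
qed

lemma xi_surj: "xi ` carrier CC = carrier AX"
proof
  show "xi ` carrier CC \<subseteq> carrier AX" using xi_X by (auto simp: CC_def)
  show "carrier AX \<subseteq> xi ` carrier CC"
  proof
    fix x assume "x \<in> carrier AX"
    hence x: "x \<in> X" by simp
    then obtain y0 where y0: "y0 \<in> Y" "\<gamma> (r_coset A M y0) = r_coset A N x" using gam_surj by blast
    hence "(y0, x) \<in> Cset" using x by (simp add: Cset_def)
    then obtain k where "k \<in> carrier K" "xi k = x" using Cset_pr by blast
    thus "x \<in> xi ` carrier CC" by (auto simp: CC_def)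
  qed
qed

lemma p2_main: "\<exists>C :: 'a monoid. skew_brace_mult K C \<and>
               (\<exists>T V. normal T C \<and> normal V C \<and> T \<inter> V = {\<one>\<^bsub>C\<^esub>} \<and>
                  AX \<cong> C Mod T \<and> AY \<cong> C Mod V)"
proof (intro exI conjI)
  show "skew_brace_mult K CC" by (rule CC_brace)
  show nT: "kernel CC AX xi \<lhd> CC" by (rule group_hom.normal_kernel[OF gh_xi])
  show nV: "kernel CC AY lam \<lhd> CC" by (rule group_hom.normal_kernel[OF gh_lam])
  show "AX \<cong> CC Mod kernel CC AX xi"
    using group.iso_sym[OF normal.factorgroup_is_group[OF nT] group_hom.FactGroup_iso[OF gh_xi xi_surj]] .
  show "AY \<cong> CC Mod kernel CC AY lam"
    using group.iso_sym[OF normal.factorgroup_is_group[OF nV] group_hom.FactGroup_iso[OF gh_lam lam_surj]] .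
  show "kernel CC AX xi \<inter> kernel CC AY lam = {\<one>\<^bsub>CC\<^esub>}"
  proof (intro equalityI subsetI)
    fix a
    assume "a \<in> kernel CC AX xi \<inter> kernel CC AY lam"
    hence a: "a \<in> carrier K" "xi a = \<one>\<^bsub>A\<^esub>" "lam a = \<one>\<^bsub>A\<^esub>" by (auto simp: kernel_def CC_def)
    hence "cj a = \<one>\<^bsub>A\<^esub>" using xi_eq[OF a(1)] by simp
    thus "a \<in> {\<one>\<^bsub>CC\<^esub>}" using cj_triv a by (simp add: CC_def)
  next
    fix a
    assume "a \<in> {\<one>\<^bsub>CC\<^esub>}"
    thus "a \<in> kernel CC AX xi \<inter> kernel CC AY lam" by (simp add: kernel_def CC_def lam_one xi_one)
  qed
qed

end

theorem theoremA:
  fixes K :: "('a, 'b) monoid_scheme"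
  assumes "group K" and "finite (carrier K)" and "grp_center K = {\<one>\<^bsub>K\<^esub>}"
  shows "(\<forall>C :: 'a monoid. skew_brace_mult K C \<longrightarrow>
            (\<exists>X Y. subgroup X (AutoGroup K) \<and> subgroup Y (AutoGroup K) \<and>
               (\<exists>N M \<gamma>. aut_conditions K X Y N M \<gamma>) \<and>
               (\<exists>T V. normal T C \<and> normal V C \<and> T \<inter> V = {\<one>\<^bsub>C\<^esub>} \<and>
                  (AutoGroup K)\<lparr>carrier := X\<rparr> \<cong> C Mod T \<and>
                  (AutoGroup K)\<lparr>carrier := Y\<rparr> \<cong> C Mod V)))
       \<and>
         (\<forall>X Y N M \<gamma>. subgroup X (AutoGroup K) \<and> subgroup Y (AutoGroup K) \<and>
              aut_conditions K X Y N M \<gamma> \<longrightarrow>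
            (\<exists>C :: 'a monoid. skew_brace_mult K C \<and>
               (\<exists>T V. normal T C \<and> normal V C \<and> T \<inter> V = {\<one>\<^bsub>C\<^esub>} \<and>
                  (AutoGroup K)\<lparr>carrier := X\<rparr> \<cong> C Mod T \<and>
                  (AutoGroup K)\<lparr>carrier := Y\<rparr> \<cong> C Mod V)))"
proof -
  have z: "zk K" using assms by (simp add: zk_def zk_axioms_def)
  show ?thesis
  proof (intro conjI allI impI)
    fix C :: "'a monoid" assume "skew_brace_mult K C"
    hence "p1 K C" using z by (simp add: p1_def p1_axioms_def)
    thus "\<exists>X Y. subgroup X (AutoGroup K) \<and> subgroup Y (AutoGroup K) \<and>
               (\<exists>N M \<gamma>. aut_conditions K X Y N M \<gamma>) \<and>
               (\<exists>T V. normal T C \<and> normal V C \<and> T \<inter> V = {\<one>\<^bsub>C\<^esub>} \<and>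
                  (AutoGroup K)\<lparr>carrier := X\<rparr> \<cong> C Mod T \<and>
                  (AutoGroup K)\<lparr>carrier := Y\<rparr> \<cong> C Mod V)"
      by (rule p1.p1_main)
  next
    fix X Y N M \<gamma>
    assume "subgroup X (AutoGroup K) \<and> subgroup Y (AutoGroup K) \<and> aut_conditions K X Y N M \<gamma>"
    hence "p2 K X Y N M \<gamma>" using z by (simp add: p2_def p2_axioms_def)
    thus "\<exists>C :: 'a monoid. skew_brace_mult K C \<and>
               (\<exists>T V. normal T C \<and> normal V C \<and> T \<inter> V = {\<one>\<^bsub>C\<^esub>} \<and>
                  (AutoGroup K)\<lparr>carrier := X\<rparr> \<cong> C Mod T \<and>
                  (AutoGroup K)\<lparr>carrier := Y\<rparr> \<cong> C Mod V)"
      by (rule p2.p2_main)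
  qed
qed

end
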